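(* Let $N=\{1,\dots,n\}$, let $\tilde Q\in\mathbb{R}^{n\times n}$ be symmetric positive definite, $\tilde d\in\mathbb{R}^n$, and $a,b\in\mathbb{R}^n$ with $b\le a$ componentwise. Let $A,B\subseteq N$ be disjoint, $I=N\setminus(A\cup B)$, and let $(x,s,t)$ be the KKT solution for $(A,B)$. Let $C=\{i: x_i<b_i \text{ or } s_i<0\}$, $D=\{i: x_i>a_i \text{ or } t_i>0\}$, and let $(y,u,v)$ be the KKT solution for $(C,D)$. Let $U=\{i\in I: x_i<b_i\}$, $V=\{i\in I: x_i>a_i\}$, $W=U\cup V$, $\overline W=N\setminus W$ and $z=y-x$. Then $$\tilde J(y)-\tilde J(x)=\tfrac12\, z_W^{\top}\tilde Q_W z_W-\tfrac12\, z_{\overline W}^{\top}\tilde Q_{\overline W} z_{\overline W},$$ where $\tilde J(w)=\tfrac12 w^{\top}\tilde Q w+\tilde d^{\top}w$.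
   Context: For disjoint $A_1,A_2\subseteq N$, the KKT solution for $(A_1,A_2)$ is the unique triple $(x,s,t)\in(\mathbb{R}^n)^3$ with $x_{A_1}=b_{A_1}$, $x_{A_2}=a_{A_2}$, $s_i=0$ for $i\notin A_1$, $t_i=0$ for $i\notin A_2$, and $\tilde Qx+\tilde d+s+t=0$ (unique since $\tilde Q\succ0$). The sets $C$ and $D$ defined in the claim are disjoint. For $M\subseteq N$, $z_M$ denotes the subvector of $z$ indexed by $M$ and $\tilde Q_M$ the principal submatrix of $\tilde Q$ indexed by $M$. *)

theory Defs
  imports "HOL-Analysis.Analysis"
begin

text \<open>Vectors in R^n are modelled as real^'n with the finite index type 'n playing N.\<close>

definition sym_pd :: "real^'n^'n \<Rightarrow> bool" where
  "sym_pd Q \<longleftrightarrow> transpose Q = Q \<and> (\<forall>x. x \<noteq> 0 \<longrightarrow> x \<bullet> (Q *v x) > 0)"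

definition is_KKT_sol ::
  "real^'n^'n \<Rightarrow> real^'n \<Rightarrow> real^'n \<Rightarrow> real^'n \<Rightarrow> 'n set \<Rightarrow> 'n set
     \<Rightarrow> real^'n \<Rightarrow> real^'n \<Rightarrow> real^'n \<Rightarrow> bool" where
  "is_KKT_sol Q d a b A1 A2 x s t \<longleftrightarrow>
     (\<forall>i\<in>A1. x$i = b$i) \<and> (\<forall>i\<in>A2. x$i = a$i) \<and>
     (\<forall>i. i \<notin> A1 \<longrightarrow> s$i = 0) \<and> (\<forall>i. i \<notin> A2 \<longrightarrow> t$i = 0) \<and>
     Q *v x + d + s + t = 0"

definition sub_quad :: "real^'n^'n \<Rightarrow> 'n set \<Rightarrow> real^'n \<Rightarrow> real" where
  "sub_quad Q M z = (\<Sum>i\<in>M. \<Sum>j\<in>M. z$i * Q$i$j * z$j)"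

definition Jt :: "real^'n^'n \<Rightarrow> real^'n \<Rightarrow> real^'n \<Rightarrow> real" where
  "Jt Q d w = (1/2) * (w \<bullet> (Q *v w)) + d \<bullet> w"

end

theory Submission
  imports Defs
begin

lemma inner_Mv: "x \<bullet> (Q *v y) = (\<Sum>i\<in>UNIV. \<Sum>j\<in>UNIV. x$i * Q$i$j * y$j)"
  by (simp add: inner_vec_def matrix_vector_mult_def sum_distrib_left mult.assoc)

lemma splitU: "(\<Sum>i\<in>(UNIV::'n::finite set). f i) = sum f M + sum f (UNIV - M)"
  using sum.Int_Diff[of "UNIV::'n set" f M] by simp

lemma quad_split:
  fixes Q :: "real^'n^'n" and z :: "real^'n"
  assumes sym: "\<And>i j. Q$i$j = Q$j$i"
  shows "z \<bullet> (Q *v z) = sub_quad Q W z + sub_quad Q (UNIV - W) z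
          + 2 * (\<Sum>i\<in>UNIV - W. \<Sum>j\<in>W. z$i * Q$i$j * z$j)"
    and "(\<Sum>i\<in>UNIV - W. z$i * (Q *v z)$i) = sub_quad Q (UNIV - W) z
          + (\<Sum>i\<in>UNIV - W. \<Sum>j\<in>W. z$i * Q$i$j * z$j)"
proof -
  define P where "P i j = z$i * Q$i$j * z$j" for i j
  have Psym: "P i j = P j i" for i j unfolding P_def using sym[of i j] by simp
  have X: "(\<Sum>i\<in>W. \<Sum>j\<in>UNIV - W. P i j) = (\<Sum>i\<in>UNIV - W. \<Sum>j\<in>W. P i j)"
    by (subst sum.swap) (simp add: Psym)
  have "z \<bullet> (Q *v z) = (\<Sum>i\<in>UNIV. \<Sum>j\<in>UNIV. P i j)" by (simp add: inner_Mv P_def)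
  also have "\<dots> = (\<Sum>i\<in>UNIV. (\<Sum>j\<in>W. P i j) + (\<Sum>j\<in>UNIV - W. P i j))"
    by (rule sum.cong[OF refl], rule splitU)
  also have "\<dots> = (\<Sum>i\<in>W. (\<Sum>j\<in>W. P i j) + (\<Sum>j\<in>UNIV - W. P i j))
      + (\<Sum>i\<in>UNIV - W. (\<Sum>j\<in>W. P i j) + (\<Sum>j\<in>UNIV - W. P i j))"
    by (rule splitU)
  finally show "z \<bullet> (Q *v z) = sub_quad Q W z + sub_quad Q (UNIV - W) z
          + 2 * (\<Sum>i\<in>UNIV - W. \<Sum>j\<in>W. z$i * Q$i$j * z$j)"
    using X by (simp add: sum.distrib sub_quad_def P_def[symmetric])
  have "(\<Sum>i\<in>UNIV - W. z$i * (Q *v z)$i) = (\<Sum>i\<in>UNIV - W. \<Sum>j\<in>UNIV. P i j)"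
    by (simp add: matrix_vector_mult_def sum_distrib_left P_def mult.assoc)
  also have "\<dots> = (\<Sum>i\<in>UNIV - W. (\<Sum>j\<in>W. P i j) + (\<Sum>j\<in>UNIV - W. P i j))"
    by (rule sum.cong[OF refl], rule splitU)
  finally show "(\<Sum>i\<in>UNIV - W. z$i * (Q *v z)$i) = sub_quad Q (UNIV - W) z
          + (\<Sum>i\<in>UNIV - W. \<Sum>j\<in>W. z$i * Q$i$j * z$j)"
    by (simp add: sum.distrib sub_quad_def P_def[symmetric])
qed

theorem mainTheorem1:
  fixes Q :: "real^'n^'n" and d a b x s t y u v :: "real^'n" and A B :: "'n set"
  assumes "sym_pd Q"
    and "\<forall>i. b$i \<le> a$i"
    and "A \<inter> B = {}"
    and "is_KKT_sol Q d a b A B x s t"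
    and "is_KKT_sol Q d a b {i. x$i < b$i \<or> s$i < 0} {i. x$i > a$i \<or> t$i > 0} y u v"
  shows "let I = UNIV - (A \<union> B);
             U = {i\<in>I. x$i < b$i};
             V = {i\<in>I. x$i > a$i};
             W = U \<union> V;
             z = y - x
         in Jt Q d y - Jt Q d x = (1/2) * sub_quad Q W z - (1/2) * sub_quad Q (UNIV - W) z"
proof -
  define I where "I = UNIV - (A \<union> B)"
  define W where "W = {i\<in>I. x$i < b$i} \<union> {i\<in>I. x$i > a$i}"
  define z where "z = y - x"
  have trQ: "transpose Q = Q" using assms(1) unfolding sym_pd_def by simp
  have sym: "Q$i$j = Q$j$i" for i j
  proof -
    have "transpose Q $ i $ j = Q$j$i" by (simp add: transpose_def)
    then show ?thesis using trQ by simp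
  qed
  have swap: "p \<bullet> (Q *v r) = r \<bullet> (Q *v p)" for p r
    unfolding inner_Mv by (subst sum.swap) (simp add: sym mult.commute mult.left_commute)
  have kx: "Q *v x + d + s + t = 0" using assms(4) unfolding is_KKT_sol_def by blast
  have ky: "Q *v y + d + u + v = 0" using assms(5) unfolding is_KKT_sol_def by blast
  have Qz: "Q *v z = (s + t) - (u + v)"
    using kx ky unfolding z_def by (simp add: matrix_vector_mult_diff_distrib algebra_simps)
      (metis add.assoc add_diff_cancel_left' diff_add_cancel eq_neg_iff_add_eq_0 diff_0)
  have yxz: "y = x + z" unfolding z_def by simp
  have J: "Jt Q d y - Jt Q d x = (1/2) * (z \<bullet> (Q *v z)) - z \<bullet> (s + t)"
  proof -
    have "y \<bullet> (Q *v y) = x \<bullet> (Q *v x) + 2 * (z \<bullet> (Q *v x)) + z \<bullet> (Q *v z)"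
      unfolding yxz by (simp add: matrix_vector_right_distrib inner_add_left inner_add_right swap[of x z])
    moreover have "Q *v x + d = -(s+t)"
    proof -
      have "Q *v x + d = (Q *v x + d + s + t) - (s+t)" by (simp add: algebra_simps)
      then show ?thesis using kx by simp
    qed
    hence "z \<bullet> (Q *v x) + d \<bullet> z = - (z \<bullet> (s+t))"
      by (metis inner_add_right inner_commute inner_minus_right)
    ultimately show ?thesis unfolding Jt_def yxz by (simp add: inner_add_right algebra_simps)
  qed
  have pt: "z$i * (s$i + t$i) = (if i \<in> UNIV - W then z$i * (Q *v z)$i else 0)" for i
  proof (cases "i \<in> W")
    case True
    hence "i \<notin> A" "i \<notin> B" unfolding W_def I_def by auto
    then show ?thesis using True assms(4) unfolding is_KKT_sol_def by simp
  next
    case False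
    have "z$i * (u$i + v$i) = 0"
    proof (cases "i \<in> A")
      case iA: True
      hence "i \<notin> B" using assms(3) by blast
      hence xi: "x$i = b$i" "t$i = 0" using iA assms(4) unfolding is_KKT_sol_def by auto
      show ?thesis
      proof (cases "s$i < 0")
        case True
        hence "y$i = b$i" using assms(5) xi unfolding is_KKT_sol_def by auto
        then show ?thesis using xi unfolding z_def by simp
      next
        case False
        hence "u$i = 0" "v$i = 0" using assms(5) assms(2) xi unfolding is_KKT_sol_def
          by (auto simp: not_less)
        then show ?thesis by simp
      qed
    next
      case nA: False
      show ?thesis
      proof (cases "i \<in> B")
        case iB: True
        hence xi: "x$i = a$i" "s$i = 0" using nA assms(4) unfolding is_KKT_sol_def by auto
        show ?thesis
        proof (cases "t$i > 0")
          case True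
          hence "y$i = a$i" using assms(5) xi unfolding is_KKT_sol_def by auto
          then show ?thesis using xi unfolding z_def by simp
        next
          case False
          hence "u$i = 0" "v$i = 0" using assms(5) assms(2) xi unfolding is_KKT_sol_def
            by (auto simp: not_less)
          then show ?thesis by simp
        qed
      next
        case nB: False
        hence "i \<in> I" using nA unfolding I_def by auto
        hence xi: "b$i \<le> x$i" "x$i \<le> a$i" using False unfolding W_def by auto
        have st: "s$i = 0" "t$i = 0" using nA nB assms(4) unfolding is_KKT_sol_def by auto
        hence "u$i = 0" "v$i = 0" using assms(5) xi unfolding is_KKT_sol_def by auto
        then show ?thesis by simp
      qed
    qed
    then show ?thesis using False by (simp add: Qz algebra_simps)
  qed
  have zst: "z \<bullet> (s + t) = (\<Sum>i\<in>UNIV - W. z$i * (Q *v z)$i)"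
  proof -
    have "z \<bullet> (s + t) = (\<Sum>i\<in>UNIV. z$i * (s$i + t$i))" by (simp add: inner_vec_def)
    also have "\<dots> = (\<Sum>i\<in>UNIV. if i \<in> UNIV - W then z$i * (Q *v z)$i else 0)"
      using pt by simp
    also have "\<dots> = (\<Sum>i\<in>UNIV - W. z$i * (Q *v z)$i)"
      by (simp add: sum.If_cases set_diff_eq)
    finally show ?thesis .
  qed
  show ?thesis
    unfolding Let_def I_def[symmetric] W_def[symmetric] z_def[symmetric]
    using J zst quad_split[OF sym, of z W] by (simp add: field_simps)
qed

end
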